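(* Let $T$ be a strongly connected tournament on $n$ vertices which has an edge $e$ from $u$ to $v$ such that every directed cycle of $T$ contains $e$. Then the vertices of $T$ can be labeled $v_1,\ldots,v_n$ so that $T=D_n$, $u=v_n$ and $v=v_1$, where $D_n$ is the tournament in which, for $1\le i<j\le n$ with $(i,j)\ne(1,n)$, the edge between $v_i$ and $v_j$ is directed from $v_i$ to $v_j$, and the edge between $v_1$ and $v_n$ is directed from $v_n$ to $v_1$.
   Context: A tournament is an orientation of a complete graph; it is strongly connected if for any two vertices there is a directed path from each to the other. *)

theory Defs
  imports Main
begin

text \<open>A digraph is given by a vertex set V and an arc relation A (A x y: arc from x to y).\<close>

definition tournament :: "'a set \<Rightarrow> ('a \<Rightarrow> 'a \<Rightarrow> bool) \<Rightarrow> bool" where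
  "tournament V A \<longleftrightarrow> finite V
     \<and> (\<forall>x y. A x y \<longrightarrow> x \<in> V \<and> y \<in> V)
     \<and> (\<forall>x. \<not> A x x)
     \<and> (\<forall>x\<in>V. \<forall>y\<in>V. x \<noteq> y \<longrightarrow> (A x y \<longleftrightarrow> \<not> A y x))"

definition strongly_connected :: "'a set \<Rightarrow> ('a \<Rightarrow> 'a \<Rightarrow> bool) \<Rightarrow> bool" where
  "strongly_connected V A \<longleftrightarrow> (\<forall>x\<in>V. \<forall>y\<in>V. A\<^sup>*\<^sup>* x y)"

definition dicycle :: "'a set \<Rightarrow> ('a \<Rightarrow> 'a \<Rightarrow> bool) \<Rightarrow> 'a list \<Rightarrow> bool" where
  "dicycle V A c \<longleftrightarrow> length c \<ge> 2 \<and> distinct c \<and> set c \<subseteq> V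
     \<and> (\<forall>i < length c. A (c ! i) (c ! ((i + 1) mod length c)))"

definition cycle_contains_arc :: "'a list \<Rightarrow> 'a \<Rightarrow> 'a \<Rightarrow> bool" where
  "cycle_contains_arc c u v \<longleftrightarrow>
     (\<exists>i < length c. c ! i = u \<and> c ! ((i + 1) mod length c) = v)"

definition D_arc :: "nat \<Rightarrow> nat \<Rightarrow> nat \<Rightarrow> bool" where
  "D_arc n i j \<longleftrightarrow> (i < j \<and> (i, j) \<noteq> (1, n)) \<or> (i = n \<and> j = 1)"

end

theory Submission
  imports Defs
begin

lemma no_closed_walk:
  assumes nocyc: "\<And>c. dicycle V A c \<Longrightarrow> False"
    and inV: "\<And>x y. A x y \<Longrightarrow> x \<in> V \<and> y \<in> V"
    and irr: "\<And>x. \<not> A x x"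
  shows "\<not> A\<^sup>+\<^sup>+ x x"
proof
  assume "A\<^sup>+\<^sup>+ x x"
  then obtain k0 where "k0 > 0" "(A ^^ k0) x x" by (auto simp: tranclp_power)
  then obtain c0 where "c0 0 = c0 k0" "\<forall>i<k0. A (c0 i) (c0 (Suc i))"
    by (auto simp: relpowp_fun_conv) metis
  define P where "P k \<longleftrightarrow> k > 0 \<and> (\<exists>c. c 0 = c k \<and> (\<forall>i<k. A (c i) (c (Suc i))))" for k
  have "P k0" unfolding P_def using \<open>k0 > 0\<close> \<open>c0 0 = c0 k0\<close> \<open>\<forall>i<k0. A (c0 i) (c0 (Suc i))\<close> by blast
  define k where "k = (LEAST k. P k)"
  have Pk: "P k" unfolding k_def by (rule LeastI[of P k0]) fact
  have kmin: "\<And>m. P m \<Longrightarrow> k \<le> m" unfolding k_def by (rule Least_le)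
  obtain c where kpos: "k > 0" and c0: "c 0 = c k" and cw: "\<forall>i<k. A (c i) (c (Suc i))"
    using Pk unfolding P_def by blast
  have dist: "distinct (map c [0..<k])"
  proof (subst distinct_conv_nth, intro allI impI)
    fix i j assume ij: "i < length (map c [0..<k])" "j < length (map c [0..<k])" "i \<noteq> j"
    show "map c [0..<k] ! i \<noteq> map c [0..<k] ! j"
    proof
      assume eq: "map c [0..<k] ! i = map c [0..<k] ! j"
      have "\<exists>a b. a < b \<and> b < k \<and> c a = c b"
      proof -
        have cij: "c i = c j" "i < k" "j < k" using ij eq by auto
        show ?thesis
        proof (cases "i < j")
          case True then show ?thesis using cij by blast
        next
          case False then have "j < i" using ij by simp
          then show ?thesis using cij by metis
        qed
      qed
      then obtain a b where ab: "a < b" "b < k" "c a = c b" by blast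
      have h1: "(\<lambda>m. c (a + m)) 0 = (\<lambda>m. c (a + m)) (b - a)" using ab by simp
      have h2: "\<forall>i<b - a. A ((\<lambda>m. c (a + m)) i) ((\<lambda>m. c (a + m)) (Suc i))" using ab cw by auto
      have "P (b - a)" unfolding P_def using h1 h2 ab by (intro conjI exI[of _ "\<lambda>m. c (a + m)"]) auto
      then have "k \<le> b - a" by (rule kmin)
      then show False using ab by simp
    qed
  qed
  have k2: "k \<ge> 2"
  proof (rule ccontr)
    assume "\<not> 2 \<le> k" then have "k = 1" using kpos by simp
    then show False using cw c0 irr by (metis One_nat_def less_one)
  qed
  have "dicycle V A (map c [0..<k])"
    unfolding dicycle_def
  proof (intro conjI allI impI)
    show "2 \<le> length (map c [0..<k])" using k2 by simp
    show "distinct (map c [0..<k])" by fact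
    show "set (map c [0..<k]) \<subseteq> V" using cw inV by auto
    fix i assume i: "i < length (map c [0..<k])"
    show "A (map c [0..<k] ! i) (map c [0..<k] ! ((i + 1) mod length (map c [0..<k])))"
    proof (cases "i + 1 = k")
      case True then show ?thesis using i cw c0 by (auto)
    next
      case False then show ?thesis using i cw by auto
    qed
  qed
  then show False by (rule nocyc)
qed

lemma topo_sort:
  assumes "finite V" "card V = n"
    and acyc: "\<And>x. \<not> B\<^sup>+\<^sup>+ x x"
  shows "\<exists>f. bij_betw f {1..n} V \<and> (\<forall>i\<in>{1..n}. \<forall>j\<in>{1..n}. B (f i) (f j) \<longrightarrow> i < j)"
  using assms
proof (induction n arbitrary: V)
  case 0
  then have "V = {}" by simp
  then show ?case by (auto simp: bij_betw_def)
next
  case (Suc n)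
  then have ne: "V \<noteq> {}" by auto
  then obtain x0 where "x0 \<in> V" by blast
  let ?r = "{(y, x). B x y \<and> x \<in> V \<and> y \<in> V}"
  have fin: "finite ?r"
  proof (rule finite_subset)
    show "?r \<subseteq> V \<times> V" by auto
    show "finite (V \<times> V)" using Suc.prems(1) by simp
  qed
  have "acyclic {(x, y). B x y}"
    unfolding acyclic_def
  proof
    fix x
    have "(\<lambda>a b. (a, b) \<in> {(x, y). B x y})\<^sup>+\<^sup>+ = B\<^sup>+\<^sup>+" by simp
    then show "(x, x) \<notin> {(x, y). B x y}\<^sup>+" using Suc.prems(3)[of x]
      by (metis tranclp_trancl_eq)
  qed
  then have "acyclic {(y, x). B x y}" using acyclic_converse[of "{(x, y). B x y}"]
    by (simp add: converse_def)
  then have "acyclic ?r" by (rule acyclic_subset) auto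
  then have "wf ?r" using fin finite_acyclic_wf by blast
  then obtain s where sV: "s \<in> V" and sink: "\<And>y. (y, s) \<in> ?r \<Longrightarrow> y \<notin> V"
    using wfE_min[of ?r x0 V] \<open>x0 \<in> V\<close> by blast
  have nos: "\<And>y. y \<in> V \<Longrightarrow> \<not> B s y" using sink sV by blast
  have "\<exists>f. bij_betw f {1..n} (V - {s}) \<and> (\<forall>i\<in>{1..n}. \<forall>j\<in>{1..n}. B (f i) (f j) \<longrightarrow> i < j)"
  proof (rule Suc.IH)
    show "finite (V - {s})" using Suc.prems(1) by simp
    show "card (V - {s}) = n" using Suc.prems(1,2) sV by simp
    show "\<And>x. \<not> B\<^sup>+\<^sup>+ x x" by fact
  qed
  then obtain f where bf: "bij_betw f {1..n} (V - {s})"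
    and of: "\<forall>i\<in>{1..n}. \<forall>j\<in>{1..n}. B (f i) (f j) \<longrightarrow> i < j" by blast
  define g where "g = f(Suc n := s)"
  have "bij_betw g {1..n} (V - {s})"
  proof -
    have "bij_betw g {1..n} (V - {s}) = bij_betw f {1..n} (V - {s})"
      by (rule bij_betw_cong) (simp add: g_def)
    then show ?thesis using bf by simp
  qed
  then have "bij_betw g ({1..n} \<union> {Suc n}) ((V - {s}) \<union> {s})"
  proof (rule bij_betw_combine)
    show "bij_betw g {Suc n} {s}" by (simp add: g_def)
    show "(V - {s}) \<inter> {s} = {}" by simp
  qed
  moreover have "{1..n} \<union> {Suc n} = {1..Suc n}" by auto
  moreover have "(V - {s}) \<union> {s} = V" using sV by auto
  ultimately have bg: "bij_betw g {1..Suc n} V" by (simp only:)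
  have "\<forall>i\<in>{1..Suc n}. \<forall>j\<in>{1..Suc n}. B (g i) (g j) \<longrightarrow> i < j"
  proof (intro ballI impI)
    fix i j assume i: "i \<in> {1..Suc n}" and j: "j \<in> {1..Suc n}" and b: "B (g i) (g j)"
    show "i < j"
    proof (cases "i = Suc n")
      case True
      have "g j \<in> V" using bij_betw_apply[OF bg j] .
      then show ?thesis using True b nos by (simp add: g_def)
    next
      case False
      show ?thesis
      proof (cases "j = Suc n")
        case True then show ?thesis using False i by simp
      next
        case False2: False
        then show ?thesis using False i j b of by (auto simp: g_def)
      qed
    qed
  qed
  then show ?case using bg by blast
qed

theorem mainTheorem11:
  fixes V :: "'a set" and A :: "'a \<Rightarrow> 'a \<Rightarrow> bool" and n :: nat and u v :: 'a
  assumes "tournament V A"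
    and "card V = n"
    and "strongly_connected V A"
    and "A u v"
    and "\<forall>c. dicycle V A c \<longrightarrow> cycle_contains_arc c u v"
  shows "\<exists>f. bij_betw f {1..n} V \<and> f n = u \<and> f 1 = v
           \<and> (\<forall>i\<in>{1..n}. \<forall>j\<in>{1..n}. A (f i) (f j) \<longleftrightarrow> D_arc n i j)"
proof -
  note T = assms(1)[unfolded tournament_def]
  have finV: "finite V" using T by blast
  have inV: "\<And>x y. A x y \<Longrightarrow> x \<in> V \<and> y \<in> V" using T by blast
  have irr: "\<And>x. \<not> A x x" using T by blast
  have tot: "\<And>x y. x \<in> V \<Longrightarrow> y \<in> V \<Longrightarrow> x \<noteq> y \<Longrightarrow> A x y \<longleftrightarrow> \<not> A y x" using T by blast
  have sc: "\<And>x y. x \<in> V \<Longrightarrow> y \<in> V \<Longrightarrow> A\<^sup>*\<^sup>* x y" using assms(3) unfolding strongly_connected_def by blast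
  define B where "B x y \<longleftrightarrow> A x y \<and> \<not> (x = u \<and> y = v)" for x y
  have uV: "u \<in> V" and vV: "v \<in> V" using inV assms(4) by auto
  have uv: "u \<noteq> v" using irr assms(4) by metis
  have acyc: "\<And>x. \<not> B\<^sup>+\<^sup>+ x x"
  proof (rule no_closed_walk)
    fix c assume dc: "dicycle V B c"
    then have "dicycle V A c" unfolding dicycle_def B_def by blast
    then have "cycle_contains_arc c u v" using assms(5) by blast
    then show False using dc unfolding cycle_contains_arc_def dicycle_def B_def by blast
  next
    show "\<And>x y. B x y \<Longrightarrow> x \<in> V \<and> y \<in> V" using inV B_def by blast
    show "\<And>x. \<not> B x x" using irr B_def by blast
  qed
  obtain f where bf: "bij_betw f {1..n} V"
    and ord: "\<forall>i\<in>{1..n}. \<forall>j\<in>{1..n}. B (f i) (f j) \<longrightarrow> i < j"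
    using topo_sort[OF finV assms(2) acyc] by blast
  have injf: "inj_on f {1..n}" using bf bij_betw_imp_inj_on by blast
  have imf: "f ` {1..n} = V" using bf bij_betw_imp_surj_on by blast
  have n2: "n \<ge> 2"
  proof -
    have "{u, v} \<subseteq> V" using uV vV by simp
    then have "card {u, v} \<le> n" using assms(2) finV card_mono by blast
    then show ?thesis using uv by simp
  qed
  have fV: "\<And>i. i \<in> {1..n} \<Longrightarrow> f i \<in> V" using imf by blast
  have preim: "\<And>y. y \<in> V \<Longrightarrow> \<exists>j\<in>{1..n}. f j = y" using imf by (metis imageE)
  have i1: "1 \<in> {1..n}" and inn: "n \<in> {1..n}" using n2 by auto
  have f1: "f 1 = v"
  proof (rule ccontr)
    assume ne: "f 1 \<noteq> v"
    have "A\<^sup>*\<^sup>* v (f 1)" using sc vV fV[OF i1] by blast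
    then obtain y where "A y (f 1)"
      using ne by (metis rtranclp.cases)
    then have "B y (f 1)" using ne B_def by blast
    moreover obtain j where "j \<in> {1..n}" "f j = y" using preim inV \<open>A y (f 1)\<close> by blast
    ultimately show False using ord i1 by fastforce
  qed
  have fn: "f n = u"
  proof (rule ccontr)
    assume ne: "f n \<noteq> u"
    have "A\<^sup>*\<^sup>* (f n) u" using sc uV fV[OF inn] by blast
    then obtain y where "A (f n) y"
      using ne by (metis converse_rtranclpE)
    then have "B (f n) y" using ne B_def by blast
    moreover obtain j where "j \<in> {1..n}" "f j = y" using preim inV \<open>A (f n) y\<close> by blast
    ultimately show False using ord inn by fastforce
  qed
  have arcs: "\<forall>i\<in>{1..n}. \<forall>j\<in>{1..n}. A (f i) (f j) \<longleftrightarrow> D_arc n i j"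
  proof (intro ballI)
    fix i j assume i: "i \<in> {1..n}" and j: "j \<in> {1..n}"
    have fiu: "f i = u \<longleftrightarrow> i = n" using injf i inn fn by (metis inj_onD)
    have fiv: "f i = v \<longleftrightarrow> i = 1" using injf i i1 f1 by (metis inj_onD)
    have fju: "f j = u \<longleftrightarrow> j = n" using injf j inn fn by (metis inj_onD)
    have fjv: "f j = v \<longleftrightarrow> j = 1" using injf j i1 f1 by (metis inj_onD)
    have fij: "f i = f j \<longleftrightarrow> i = j" using injf i j by (metis inj_onD)
    have oij: "B (f i) (f j) \<Longrightarrow> i < j" using ord i j by blast
    have oji: "B (f j) (f i) \<Longrightarrow> j < i" using ord i j by blast
    have tij: "f i \<noteq> f j \<Longrightarrow> A (f i) (f j) \<longleftrightarrow> \<not> A (f j) (f i)" using tot fV i j by blast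
    show "A (f i) (f j) \<longleftrightarrow> D_arc n i j"
    proof (cases "i = j")
      case True then show ?thesis using irr n2 by (auto simp: D_arc_def)
    next
      case False
      then have ne: "f i \<noteq> f j" using fij by blast
      show ?thesis
      proof (cases "i < j")
        case True
        show ?thesis
        proof (cases "i = 1 \<and> j = n")
          case True
          then show ?thesis using tij ne assms(4) fiv fju by (auto simp: D_arc_def)
        next
          case False
          have "\<not> B (f j) (f i)" using oji \<open>i < j\<close> by (meson less_asym)
          moreover have "\<not> (f j = u \<and> f i = v)" using False fiv fju by blast
          ultimately have "A (f i) (f j)" using tij ne B_def by blast
          then show ?thesis using False \<open>i < j\<close> by (auto simp: D_arc_def)
        qed
      next
        case False
        then have ji: "j < i" using \<open>i \<noteq> j\<close> by simp
        show ?thesis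
        proof (cases "i = n \<and> j = 1")
          case True then show ?thesis using assms(4) fn f1 by (auto simp: D_arc_def)
        next
          case False2: False
          have "\<not> B (f i) (f j)" using oij ji by (meson less_asym)
          moreover have "\<not> (f i = u \<and> f j = v)" using False2 fiu fjv by blast
          ultimately have "\<not> A (f i) (f j)" using B_def by blast
          then show ?thesis using False2 ji i j by (auto simp: D_arc_def)
        qed
      qed
    qed
  qed
  show ?thesis using bf fn f1 arcs by blast
qed

end
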